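(* Let $p$ be a two-phase solution. At every point where $p\neq 0$ (so $\nu_1>0$), $$\begin{aligned} \Sigma_1&=-\tfrac12\tfrac{\nu_2}{\nu_1}+\Lambda_1,\\ \Sigma_2&=-\tfrac14\Lambda_1\tfrac{\nu_2}{\nu_1}-\tfrac14\nu_1+\tfrac{-\frac5{64}\Lambda_1^4+\frac38\Lambda_1^2\Lambda_2-\frac14\Lambda_2^2-\frac12\Lambda_1\Lambda_3+\Lambda_4}{\nu_1}+\tfrac12\Lambda_2+\tfrac18\Lambda_1^2,\\ \Sigma_3&=\tfrac14\nu_2+\big(\tfrac1{16}\Lambda_1^2-\tfrac14\Lambda_2\big)\tfrac{\nu_2}{\nu_1}-\tfrac14\Lambda_1\nu_1+\tfrac{\frac1{64}\Lambda_1^5-\frac18\Lambda_1^3\Lambda_2+\frac18\Lambda_1^2\Lambda_3+\frac14\Lambda_1\Lambda_2^2-\frac12\Lambda_2\Lambda_3+\Lambda_5}{\nu_1}+\tfrac12\Lambda_3,\\ \Sigma_4&=\tfrac18\Lambda_1\nu_2-\tfrac1{16}\tfrac{\nu_2^2}{\nu_1}-\tfrac1{16}\Lambda_1^2\nu_1+\big(-\tfrac1{32}\Lambda_1^3+\tfrac18\Lambda_1\Lambda_2-\tfrac14\Lambda_3\big)\tfrac{\nu_2}{\nu_1}\\ &\quad+\tfrac{-\frac1{256}\Lambda_1^6+\frac1{32}\Lambda_1^4\Lambda_2-\frac1{16}\Lambda_1^3\Lambda_3-\frac1{16}\Lambda_1^2\Lambda_2^2+\frac14\Lambda_1\Lambda_2\Lambda_3-\frac14\Lambda_3^2+\Lambda_6}{\nu_1}+\tfrac1{32}\Lambda_1^4-\tfrac18\Lambda_1^2\Lambda_2+\tfrac14\Lambda_1\Lambda_3.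 \end{aligned}$$
   Context: Let $p(x,t)$, $(x,t)\in\mathbb R^2$, be a smooth complex-valued solution of the focusing nonlinear Schrödinger equation $ip_t+p_{xx}+2|p|^2p=0$; $^*$ denotes complex conjugation and subscripts denote partial derivatives. Put $\mathbb U=\begin{pmatrix}-i\lambda& ip\\ ip^*& i\lambda\end{pmatrix}$ and $\mathbb V=\begin{pmatrix}-2i\lambda^2+i|p|^2& 2i\lambda p-p_x\\ 2i\lambda p^*+p^*_x& 2i\lambda^2-i|p|^2\end{pmatrix}$. The solution $p$ is called a two-phase solution if there exist real constants $c_0,c_1,c_2$ such that the matrix $\Psi=\begin{pmatrix}\Psi_{11}&\Psi_{12}\\ \Psi_{21}&-\Psi_{11}\end{pmatrix}$ with $\Psi_{11}=-i\lambda^3-ic_2\lambda^2+(\tfrac12 i|p|^2-ic_1)\lambda+\tfrac14(pp^*_x-p_xp^* )+\tfrac12 ic_2|p|^2-ic_0$, $\Psi_{12}=ip\lambda^2+(-\tfrac12p_x+ic_2p)\lambda-\tfrac14 ip_{xx}-\tfrac12 ip|p|^2-\tfrac12c_2p_x+ic_1p$, $\Psi_{21}=ip^*\lambda^2+(\tfrac12p^*_x+ic_2p^* )\lambda-\tfrac14 ip^*_{xx}-\tfrac12 ip^*|p|^2+\tfrac12c_2p^*_x+ic_1p^*$ satisfies $\Psi_x=[\mathbb U,\Psi]$ and $\Psi_t=[\mathbb V,\Psi]$ identically in $\lambda\in\mathbb C$. Set $\nu_1=|p|^2$ and $\nu_2=i(p^*p_x-pp^*_x)$ (both real). The polynomial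 $\mathscr R(\lambda)=-\Psi_{11}^2-\Psi_{12}\Psi_{21}$ is monic of degree 6 and independent of $(x,t)$; write $\mathscr R(\lambda)=\prod_{i=1}^6(\lambda-\lambda_i)$ and let $\Lambda_k$ denote the $k$-th elementary symmetric polynomial of $\lambda_1,\dots,\lambda_6$, so $\mathscr R(\lambda)=\sum_{k=0}^6(-1)^k\Lambda_k\lambda^{6-k}$ with $\Lambda_0=1$. At points where $p\neq0$ the Dirichlet eigenvalues $\mu_1,\mu_2$ are defined (up to order) by $\Psi_{12}(\lambda)=ip(\lambda-\mu_1)(\lambda-\mu_2)$, and $\Sigma_1,\dots,\Sigma_4$ denote the elementary symmetric polynomials of $\mu_1,\mu_2,\mu_1^*,\mu_2^*$, i.e. $(\mu-\mu_1)(\mu-\mu_2)(\mu-\mu_1^* )(\mu-\mu_2^* )=\mu^4-\Sigma_1\mu^3+\Sigma_2\mu^2-\Sigma_3\mu+\Sigma_4$. *)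

theory Defs
  imports "HOL-Analysis.Analysis"
begin

text \<open>Functions of (x,t) are modelled as maps real \<times> real \<Rightarrow> complex, the point being (x,t).\<close>

definition px :: "(real \<times> real \<Rightarrow> complex) \<Rightarrow> real \<times> real \<Rightarrow> complex" where
  "px f z = vector_derivative (\<lambda>s. f (s, snd z)) (at (fst z))"

definition pt :: "(real \<times> real \<Rightarrow> complex) \<Rightarrow> real \<times> real \<Rightarrow> complex" where
  "pt f z = vector_derivative (\<lambda>s. f (fst z, s)) (at (snd z))"

fun iter_partial :: "bool list \<Rightarrow> (real \<times> real \<Rightarrow> complex) \<Rightarrow> real \<times> real \<Rightarrow> complex" where
  "iter_partial [] f = f"
| "iter_partial (b # bs) f = (if b then pt else px) (iter_partial bs f)"

definition smooth2 :: "(real \<times> real \<Rightarrow> complex) \<Rightarrow> bool" where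
  "smooth2 f \<longleftrightarrow> (\<forall>bs z. iter_partial bs f differentiable (at z))"

definition mat2 :: "complex \<Rightarrow> complex \<Rightarrow> complex \<Rightarrow> complex \<Rightarrow> complex^2^2" where
  "mat2 a b c d = (\<chi> i j. if i = 1 then (if j = 1 then a else b) else (if j = 1 then c else d))"

definition commut :: "complex^2^2 \<Rightarrow> complex^2^2 \<Rightarrow> complex^2^2" where
  "commut A B = A ** B - B ** A"

definition mpx :: "(real \<times> real \<Rightarrow> complex^2^2) \<Rightarrow> real \<times> real \<Rightarrow> complex^2^2" where
  "mpx M z = (\<chi> i j. px (\<lambda>w. M w $ i $ j) z)"

definition mpt :: "(real \<times> real \<Rightarrow> complex^2^2) \<Rightarrow> real \<times> real \<Rightarrow> complex^2^2" where
  "mpt M z = (\<chi> i j. pt (\<lambda>w. M w $ i $ j) z)"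

definition abs2 :: "complex \<Rightarrow> complex" where
  "abs2 a = complex_of_real ((cmod a)\<^sup>2)"

definition is_NLS :: "(real \<times> real \<Rightarrow> complex) \<Rightarrow> bool" where
  "is_NLS p \<longleftrightarrow> (\<forall>z. \<i> * pt p z + px (px p) z + 2 * abs2 (p z) * p z = 0)"

definition UU :: "(real \<times> real \<Rightarrow> complex) \<Rightarrow> complex \<Rightarrow> real \<times> real \<Rightarrow> complex^2^2" where
  "UU p l z = mat2 (-\<i>*l) (\<i> * p z) (\<i> * cnj (p z)) (\<i>*l)"

definition VV :: "(real \<times> real \<Rightarrow> complex) \<Rightarrow> complex \<Rightarrow> real \<times> real \<Rightarrow> complex^2^2" where
  "VV p l z = mat2 (-2*\<i>*l^2 + \<i> * abs2 (p z)) (2*\<i>*l*p z - px p z)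
                   (2*\<i>*l*cnj (p z) + px (\<lambda>w. cnj (p w)) z) (2*\<i>*l^2 - \<i> * abs2 (p z))"

definition Psi11 :: "(real \<times> real \<Rightarrow> complex) \<Rightarrow> real \<Rightarrow> real \<Rightarrow> real \<Rightarrow> complex \<Rightarrow> real \<times> real \<Rightarrow> complex" where
  "Psi11 p c0 c1 c2 l z = -\<i>*l^3 - \<i>*c2*l^2 + (1/2*\<i>*abs2 (p z) - \<i>*c1)*l
     + 1/4*(p z * px (\<lambda>w. cnj (p w)) z - px p z * cnj (p z)) + 1/2*\<i>*c2*abs2 (p z) - \<i>*c0"

definition Psi12 :: "(real \<times> real \<Rightarrow> complex) \<Rightarrow> real \<Rightarrow> real \<Rightarrow> real \<Rightarrow> complex \<Rightarrow> real \<times> real \<Rightarrow> complex" where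
  "Psi12 p c0 c1 c2 l z = \<i>*p z*l^2 + (-1/2*px p z + \<i>*c2*p z)*l - 1/4*\<i>*px (px p) z
     - 1/2*\<i>*p z*abs2 (p z) - 1/2*c2*px p z + \<i>*c1*p z"

definition Psi21 :: "(real \<times> real \<Rightarrow> complex) \<Rightarrow> real \<Rightarrow> real \<Rightarrow> real \<Rightarrow> complex \<Rightarrow> real \<times> real \<Rightarrow> complex" where
  "Psi21 p c0 c1 c2 l z = \<i>*cnj (p z)*l^2 + (1/2*px (\<lambda>w. cnj (p w)) z + \<i>*c2*cnj (p z))*l
     - 1/4*\<i>*px (px (\<lambda>w. cnj (p w))) z - 1/2*\<i>*cnj (p z)*abs2 (p z)
     + 1/2*c2*px (\<lambda>w. cnj (p w)) z + \<i>*c1*cnj (p z)"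

definition Psi :: "(real \<times> real \<Rightarrow> complex) \<Rightarrow> real \<Rightarrow> real \<Rightarrow> real \<Rightarrow> complex \<Rightarrow> real \<times> real \<Rightarrow> complex^2^2" where
  "Psi p c0 c1 c2 l z = mat2 (Psi11 p c0 c1 c2 l z) (Psi12 p c0 c1 c2 l z)
                             (Psi21 p c0 c1 c2 l z) (- Psi11 p c0 c1 c2 l z)"

definition two_phase_with :: "(real \<times> real \<Rightarrow> complex) \<Rightarrow> real \<Rightarrow> real \<Rightarrow> real \<Rightarrow> bool" where
  "two_phase_with p c0 c1 c2 \<longleftrightarrow>
     (\<forall>l z. mpx (Psi p c0 c1 c2 l) z = commut (UU p l z) (Psi p c0 c1 c2 l z)
          \<and> mpt (Psi p c0 c1 c2 l) z = commut (VV p l z) (Psi p c0 c1 c2 l z))"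

definition RR :: "(real \<times> real \<Rightarrow> complex) \<Rightarrow> real \<Rightarrow> real \<Rightarrow> real \<Rightarrow> complex \<Rightarrow> real \<times> real \<Rightarrow> complex" where
  "RR p c0 c1 c2 l z = - (Psi11 p c0 c1 c2 l z * Psi11 p c0 c1 c2 l z) - Psi12 p c0 c1 c2 l z * Psi21 p c0 c1 c2 l z"

definition esym :: "nat \<Rightarrow> complex list \<Rightarrow> complex" where
  "esym k xs = (\<Sum>S\<in>{S. S \<subseteq> {..<length xs} \<and> card S = k}. \<Prod>i\<in>S. xs ! i)"

definition nu1 :: "(real \<times> real \<Rightarrow> complex) \<Rightarrow> real \<times> real \<Rightarrow> complex" where
  "nu1 p z = abs2 (p z)"

definition nu2 :: "(real \<times> real \<Rightarrow> complex) \<Rightarrow> real \<times> real \<Rightarrow> complex" where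
  "nu2 p z = \<i> * (cnj (p z) * px p z - p z * px (\<lambda>w. cnj (p w)) z)"

end

theory Submission
  imports Defs
begin

lemma sum7: "(\<Sum>i\<le>(6::nat). f i) = f 0 + f 1 + f 2 + f 3 + f 4 + f 5 + (f 6 :: complex)"
  by (simp add: numeral_eq_Suc atMost_Suc add_ac)
lemma sum5: "(\<Sum>i\<le>(4::nat). f i) = f 0 + f 1 + f 2 + f 3 + (f 4 :: complex)"
  by (simp add: numeral_eq_Suc atMost_Suc add_ac)
lemma sum3: "(\<Sum>i\<le>(2::nat). f i) = f 0 + f 1 + (f 2 :: complex)"
  by (simp add: numeral_eq_Suc atMost_Suc add_ac)
lemma prod4: "(\<Prod>i<(4::nat). f i) = f 0 * f 1 * f 2 * (f 3 :: complex)"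
  by (simp add: numeral_eq_Suc lessThan_Suc mult_ac)


lemma vieta:
  fixes xs :: "complex list"
  shows "(\<Prod>i<length xs. l - xs!i) = (\<Sum>k\<le>length xs. (-1)^k * esym k xs * l^(length xs - k))"
proof -
  define n where "n = length xs"
  have "(\<Prod>i<n. l - xs!i) = (\<Prod>i\<in>{..<n}. (- xs!i) + l)" by simp
  also have "\<dots> = (\<Sum>X\<in>Pow {..<n}. (\<Prod>i\<in>X. - xs!i) * (\<Prod>i\<in>{..<n}-X. l))"
    by (rule prod_add) simp
  also have "\<dots> = (\<Sum>X\<in>Pow {..<n}. (-1)^card X * (\<Prod>i\<in>X. xs!i) * l^(n - card X))"
  proof (rule sum.cong)
    fix X assume "X \<in> Pow {..<n}"
    then have "X \<subseteq> {..<n}" by auto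
    then have "card ({..<n} - X) = n - card X"
      by (simp add: card_Diff_subset finite_subset)
    then show "(\<Prod>i\<in>X. - xs!i) * (\<Prod>i\<in>{..<n}-X. l) = (-1)^card X * (\<Prod>i\<in>X. xs!i) * l^(n - card X)"
      by (simp add: prod_uminus)
  qed simp
  also have "\<dots> = (\<Sum>k\<le>n. \<Sum>X\<in>{X. X \<in> Pow {..<n} \<and> card X = k}. (-1)^card X * (\<Prod>i\<in>X. xs!i) * l^(n - card X))"
    by (rule sum.group[symmetric]) (auto intro: card_mono[of "{..<n}", simplified])
  also have "\<dots> = (\<Sum>k\<le>n. (-1)^k * esym k xs * l^(n-k))"
  proof (rule sum.cong)
    fix k assume "k \<in> {..n}"
    have "(\<Sum>X\<in>{X. X \<in> Pow {..<n} \<and> card X = k}. (-1)^card X * (\<Prod>i\<in>X. xs!i) * l^(n - card X))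
        = (\<Sum>X\<in>{X. X \<subseteq> {..<n} \<and> card X = k}. (-1)^k * l^(n - k) * (\<Prod>i\<in>X. xs!i))"
      by (rule sum.cong) auto
    also have "\<dots> = (-1)^k * esym k xs * l^(n-k)"
      unfolding esym_def n_def by (simp add: sum_distrib_left sum_distrib_right mult_ac)
    finally show "(\<Sum>X\<in>{X. X \<in> Pow {..<n} \<and> card X = k}. (-1)^card X * (\<Prod>i\<in>X. xs!i) * l^(n - card X))
        = (-1)^k * esym k xs * l^(n-k)" .
  qed simp
  finally show ?thesis unfolding n_def .
qed

lemma coeffs_eq:
  fixes c d :: "nat \<Rightarrow> complex"
  assumes "\<And>l. (\<Sum>i\<le>n. c i * l^i) = (\<Sum>i\<le>n. d i * l^i)" and "k \<le> n"
  shows "c k = d k"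
proof -
  have "\<forall>l. (\<Sum>i\<le>n. (c i - d i) * l^i) = 0"
    using assms(1) by (simp add: left_diff_distrib sum_subtractf)
  then show ?thesis using polyfun_eq_0[of "\<lambda>i. c i - d i" n] assms(2) by auto
qed

lemma px_cnj:
  assumes "\<And>z. f differentiable (at z)"
  shows "px (\<lambda>w. cnj (f w)) = (\<lambda>z. cnj (px f z))"
proof
  fix z :: "real \<times> real"
  have d1: "(\<lambda>s::real. (s, snd z)) differentiable (at (fst z))"
    by (intro derivative_intros)
  have "((\<lambda>w. f w) \<circ> (\<lambda>s. (s, snd z))) differentiable (at (fst z))"
    by (rule differentiable_chain_at[OF d1]) (simp add: assms)
  then have "(\<lambda>s. f (s, snd z)) differentiable (at (fst z))" by (simp add: o_def)
  then show "px (\<lambda>w. cnj (f w)) z = cnj (px f z)"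
    unfolding px_def by (rule vector_derivative_cnj)
qed


lemma key:
  fixes a A u U w W c0 c1 c2 I n p3 p2 p1 p0 q2 q1 q0 f2 f1 f0 ta ra tb rb L1 L2 L3 L4 L5 L6 n1 n2 S1 S2 S3 S4 :: complex
  assumes a: "a \<noteq> 0" and A: "A \<noteq> 0" and I: "I*I = -1"
  and e: "n = a*A"
    "p3 = -I" "p2 = -I*c2" "p1 = I/2*n - I*c1"
    "p0 = 1/4*(a*U - u*A) + I/2*c2*n - I*c0"
    "q2 = I*a" "q1 = -1/2*u + I*c2*a" "q0 = -1/4*I*w - 1/2*I*a*n - 1/2*c2*u + I*c1*a"
    "f2 = I*A" "f1 = 1/2*U + I*c2*A" "f0 = -1/4*I*W - 1/2*I*A*n + 1/2*c2*U + I*c1*A"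
    "ta = -q1/(I*a)" "ra = q0/(I*a)" "tb = -f1/(I*A)" "rb = f0/(I*A)"
    "L1 = 2*p3*p2" "L2 = -(2*p3*p1 + p2^2) - q2*f2"
    "L3 = (2*p3*p0 + 2*p2*p1) + (q2*f1 + q1*f2)"
    "L4 = -(2*p2*p0 + p1^2) - (q2*f0 + q1*f1 + q0*f2)"
    "L5 = 2*p1*p0 + (q1*f0 + q0*f1)"
    "L6 = (- (p0^2)) - q0*f0"
    "n1 = n" "n2 = I*(A*u - a*U)"
    "S1 = ta + tb" "S2 = ra + rb + ta*tb" "S3 = ta*rb + tb*ra" "S4 = ra*rb"
  shows "S1 = -1/2 * n2/n1 + L1
    \<and> S2 = -1/4*L1*n2/n1 - 1/4*n1
            + (-5/64*L1^4 + 3/8*L1^2*L2 - 1/4*L2^2 - 1/2*L1*L3 + L4)/n1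
            + 1/2*L2 + 1/8*L1^2
    \<and> S3 = 1/4*n2 + (1/16*L1^2 - 1/4*L2)*n2/n1 - 1/4*L1*n1
            + (1/64*L1^5 - 1/8*L1^3*L2 + 1/8*L1^2*L3 + 1/4*L1*L2^2 - 1/2*L2*L3 + L5)/n1
            + 1/2*L3
    \<and> S4 = 1/8*L1*n2 - 1/16*n2^2/n1 - 1/16*L1^2*n1
            + (-1/32*L1^3 + 1/8*L1*L2 - 1/4*L3)*n2/n1
            + (-1/256*L1^6 + 1/32*L1^4*L2 - 1/16*L1^3*L3 - 1/16*L1^2*L2^2
               + 1/4*L1*L2*L3 - 1/4*L3^2 + L6)/n1
            + 1/32*L1^4 - 1/8*L1^2*L2 + 1/4*L1*L3"
proof -
  have I0: "I \<noteq> 0" using I by auto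
  show ?thesis
  apply (simp only: e)
  apply (intro conjI)
  subgoal using a A I I0 by (simp add: field_simps) algebra
  subgoal using a A I I0 by (simp add: field_simps) algebra
  subgoal using a A I I0 by (simp add: field_simps) algebra
  subgoal using a A I I0 by (simp add: field_simps) algebra
  done
qed

theorem mainTheorem8:
  fixes p :: "real \<times> real \<Rightarrow> complex" and c0 c1 c2 :: real
    and z :: "real \<times> real" and lam :: "complex list" and mu1 mu2 :: complex
  assumes smooth: "smooth2 p"
    and nls: "is_NLS p"
    and twophase: "two_phase_with p c0 c1 c2"
    and nz: "p z \<noteq> 0"
    and roots: "length lam = 6" "\<forall>l. RR p c0 c1 c2 l z = (\<Prod>i<6. l - lam ! i)"
    and dirichlet: "\<forall>l. Psi12 p c0 c1 c2 l z = \<i> * p z * (l - mu1) * (l - mu2)"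
  defines "L1 \<equiv> esym 1 lam" and "L2 \<equiv> esym 2 lam" and "L3 \<equiv> esym 3 lam"
    and "L4 \<equiv> esym 4 lam" and "L5 \<equiv> esym 5 lam" and "L6 \<equiv> esym 6 lam"
    and "S1 \<equiv> esym 1 [mu1, mu2, cnj mu1, cnj mu2]"
    and "S2 \<equiv> esym 2 [mu1, mu2, cnj mu1, cnj mu2]"
    and "S3 \<equiv> esym 3 [mu1, mu2, cnj mu1, cnj mu2]"
    and "S4 \<equiv> esym 4 [mu1, mu2, cnj mu1, cnj mu2]"
    and "n1 \<equiv> nu1 p z" and "n2 \<equiv> nu2 p z"
  shows "S1 = -1/2 * n2/n1 + L1
    \<and> S2 = -1/4*L1*n2/n1 - 1/4*n1
            + (-5/64*L1^4 + 3/8*L1^2*L2 - 1/4*L2^2 - 1/2*L1*L3 + L4)/n1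
            + 1/2*L2 + 1/8*L1^2
    \<and> S3 = 1/4*n2 + (1/16*L1^2 - 1/4*L2)*n2/n1 - 1/4*L1*n1
            + (1/64*L1^5 - 1/8*L1^3*L2 + 1/8*L1^2*L3 + 1/4*L1*L2^2 - 1/2*L2*L3 + L5)/n1
            + 1/2*L3
    \<and> S4 = 1/8*L1*n2 - 1/16*n2^2/n1 - 1/16*L1^2*n1
            + (-1/32*L1^3 + 1/8*L1*L2 - 1/4*L3)*n2/n1
            + (-1/256*L1^6 + 1/32*L1^4*L2 - 1/16*L1^3*L3 - 1/16*L1^2*L2^2
               + 1/4*L1*L2*L3 - 1/4*L3^2 + L6)/n1
            + 1/32*L1^4 - 1/8*L1^2*L2 + 1/4*L1*L3"
  proof -
  define a where "a = p z"
  define u where "u = px p z"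
  define w where "w = px (px p) z"
  define A where "A = cnj a"
  define I where "I = \<i>"
  define C0 where "C0 = complex_of_real c0"
  define C1 where "C1 = complex_of_real c1"
  define C2 where "C2 = complex_of_real c2"
  define n where "n = a*A"
  have dp: "p differentiable (at z0)" for z0
  proof -
    have "iter_partial [] p differentiable (at z0)" using smooth unfolding smooth2_def by blast
    then show ?thesis by simp
  qed
  have dpx: "px p differentiable (at z0)" for z0
  proof -
    have "iter_partial [False] p differentiable (at z0)" using smooth unfolding smooth2_def by blast
    then show ?thesis by simp
  qed
  have pc: "px (\<lambda>w. cnj (p w)) = (\<lambda>z. cnj (px p z))" by (rule px_cnj[OF dp])
  have pcc: "px (\<lambda>w. cnj (px p w)) = (\<lambda>z. cnj (px (px p) z))" by (rule px_cnj[OF dpx])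
  have Uz: "px (\<lambda>w. cnj (p w)) z = cnj u" unfolding pc u_def by simp
  have Wz: "px (px (\<lambda>w. cnj (p w))) z = cnj w" unfolding pc pcc w_def by simp
  have ab: "abs2 (p z) = n" unfolding abs2_def n_def A_def a_def by (rule complex_norm_square)
  have a0: "a \<noteq> 0" using nz a_def by simp
  have A0: "A \<noteq> 0" using a0 A_def by simp
  have II: "I*I = -1" unfolding I_def by simp
  define p3 where "p3 = -I"
  define p2 where "p2 = -I*C2"
  define p1 where "p1 = I/2*n - I*C1"
  define p0 where "p0 = 1/4*(a*cnj u - u*A) + I/2*C2*n - I*C0"
  define q2 where "q2 = I*a"
  define q1 where "q1 = -1/2*u + I*C2*a"
  define q0 where "q0 = -1/4*I*w - 1/2*I*a*n - 1/2*C2*u + I*C1*a"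
  define f2 where "f2 = I*A"
  define f1 where "f1 = 1/2*cnj u + I*C2*A"
  define f0 where "f0 = -1/4*I*cnj w - 1/2*I*A*n + 1/2*C2*cnj u + I*C1*A"
  have P11: "\<And>l. Psi11 p c0 c1 c2 l z = p3*l^3 + p2*l^2 + p1*l + p0"
    unfolding Psi11_def ab Uz p3_def p2_def p1_def p0_def
    by (simp add: a_def[symmetric] u_def[symmetric] A_def I_def C0_def C1_def C2_def algebra_simps)
  have P12: "\<And>l. Psi12 p c0 c1 c2 l z = q2*l^2 + q1*l + q0"
    unfolding Psi12_def ab q2_def q1_def q0_def
    by (simp add: a_def[symmetric] u_def[symmetric] w_def[symmetric] I_def C0_def C1_def C2_def algebra_simps)
  have P21: "\<And>l. Psi21 p c0 c1 c2 l z = f2*l^2 + f1*l + f0"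
    unfolding Psi21_def ab Uz Wz f2_def f1_def f0_def
    by (simp add: a_def[symmetric] A_def I_def C0_def C1_def C2_def algebra_simps)
  have Rc: "\<And>l. (\<Sum>i\<le>6. [- (p0^2) - q0*f0, -(2*p1*p0) - (q1*f0 + q0*f1),
        -(2*p2*p0 + p1^2) - (q2*f0 + q1*f1 + q0*f2), -(2*p3*p0 + 2*p2*p1) - (q2*f1 + q1*f2),
        -(2*p3*p1 + p2^2) - q2*f2, -(2*p3*p2), -(p3^2)] ! i * l^i)
      = (\<Sum>i\<le>6. [L6, -L5, L4, -L3, L2, -L1, esym 0 lam] ! i * l^i)"
  proof -
    fix l
    have e1: "(\<Sum>i\<le>6. [- (p0^2) - q0*f0, -(2*p1*p0) - (q1*f0 + q0*f1),
        -(2*p2*p0 + p1^2) - (q2*f0 + q1*f1 + q0*f2), -(2*p3*p0 + 2*p2*p1) - (q2*f1 + q1*f2),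
        -(2*p3*p1 + p2^2) - q2*f2, -(2*p3*p2), -(p3^2)] ! i * l^i)
      = - ((p3*l^3 + p2*l^2 + p1*l + p0) * (p3*l^3 + p2*l^2 + p1*l + p0))
        - (q2*l^2 + q1*l + q0) * (f2*l^2 + f1*l + f0)"
      unfolding sum7 by simp algebra
    have e2: "(\<Sum>k\<le>6. (-1)^k * esym k lam * l^(6 - k)) = (\<Sum>i\<le>6. [L6, -L5, L4, -L3, L2, -L1, esym 0 lam] ! i * l^i)"
      unfolding sum7 L1_def L2_def L3_def L4_def L5_def L6_def by simp
    have "RR p c0 c1 c2 l z = (\<Sum>k\<le>6. (-1)^k * esym k lam * l^(6 - k))"
      using roots vieta[of l lam] by simp
    moreover have "RR p c0 c1 c2 l z = - ((p3*l^3 + p2*l^2 + p1*l + p0) * (p3*l^3 + p2*l^2 + p1*l + p0))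
        - (q2*l^2 + q1*l + q0) * (f2*l^2 + f1*l + f0)"
      unfolding RR_def P11 P12 P21 by simp
    ultimately show "?thesis l" using e1 e2 by simp
  qed
  have L1e: "L1 = 2*p3*p2" using coeffs_eq[OF Rc, of 5] by (simp; algebra)
  have L2e: "L2 = -(2*p3*p1 + p2^2) - q2*f2" using coeffs_eq[OF Rc, of 4] by simp
  have L3e: "L3 = (2*p3*p0 + 2*p2*p1) + (q2*f1 + q1*f2)" using coeffs_eq[OF Rc, of 3] by (simp; algebra)
  have L4e: "L4 = -(2*p2*p0 + p1^2) - (q2*f0 + q1*f1 + q0*f2)" using coeffs_eq[OF Rc, of 2] by simp
  have L5e: "L5 = 2*p1*p0 + (q1*f0 + q0*f1)" using coeffs_eq[OF Rc, of 1] by (simp; algebra)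
  have L6e: "L6 = (- (p0^2)) - q0*f0" using coeffs_eq[OF Rc, of 0] by simp
  have Dc: "\<And>l. (\<Sum>i\<le>2. [q0, q1, q2] ! i * l^i) = (\<Sum>i\<le>2. [I*a*mu1*mu2, -I*a*(mu1+mu2), I*a] ! i * l^i)"
  proof -
    fix l
    have "q2*l^2 + q1*l + q0 = I * a * (l - mu1) * (l - mu2)"
      using dirichlet P12[of l] by (simp add: I_def a_def)
    then show "?thesis l" unfolding sum3 by (simp add: algebra_simps power2_eq_square)
  qed
  have q1e: "q1 = -I*a*(mu1+mu2)" using coeffs_eq[OF Dc, of 1] by simp
  have q0e: "q0 = I*a*mu1*mu2" using coeffs_eq[OF Dc, of 0] by simp
  define ta where "ta = -q1/(I*a)"
  define ra where "ra = q0/(I*a)"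
  define tb where "tb = -f1/(I*A)"
  define rb where "rb = f0/(I*A)"
  have IA: "I*a \<noteq> 0" using a0 II by auto
  have tae: "ta = mu1 + mu2" unfolding ta_def q1e using IA by (simp add: field_simps)
  have rae: "ra = mu1 * mu2" unfolding ra_def q0e using IA by (simp add: field_simps)
  have tbe: "tb = cnj mu1 + cnj mu2"
  proof -
    have "cnj ta = tb" unfolding ta_def tb_def q1_def f1_def A_def I_def C2_def
      using a0 by (simp add: field_simps) (simp add: algebra_simps)?
    then show ?thesis using tae by simp
  qed
  have rbe: "rb = cnj mu1 * cnj mu2"
  proof -
    have "cnj ra = rb" unfolding ra_def rb_def q0_def f0_def A_def I_def C2_def C1_def n_def
      using a0 by (simp add: field_simps) (simp add: algebra_simps)?
    then show ?thesis using rae by simp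
  qed
  have Sc: "\<And>l. (\<Sum>i\<le>4. [S4, -S3, S2, -S1, esym 0 [mu1, mu2, cnj mu1, cnj mu2]] ! i * l^i)
     = (\<Sum>i\<le>4. [ra*rb, -(ta*rb + tb*ra), ra + rb + ta*tb, -(ta+tb), 1] ! i * l^i)"
  proof -
    fix l
    have e1: "(\<Sum>k\<le>4. (-1)^k * esym k [mu1, mu2, cnj mu1, cnj mu2] * l^(4 - k))
       = (\<Sum>i\<le>4. [S4, -S3, S2, -S1, esym 0 [mu1, mu2, cnj mu1, cnj mu2]] ! i * l^i)"
      unfolding sum5 S1_def S2_def S3_def S4_def by simp
    have e2: "(\<Sum>i\<le>4. [ra*rb, -(ta*rb + tb*ra), ra + rb + ta*tb, -(ta+tb), 1] ! i * l^i)
       = (l - mu1) * (l - mu2) * (l - cnj mu1) * (l - cnj mu2)"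
      unfolding sum5 tae rae tbe rbe by simp algebra
    have "(\<Prod>i<4. l - [mu1, mu2, cnj mu1, cnj mu2]!i) = (\<Sum>k\<le>4. (-1)^k * esym k [mu1, mu2, cnj mu1, cnj mu2] * l^(4 - k))"
    proof -
      have len4: "length [mu1, mu2, cnj mu1, cnj mu2] = 4" by simp
      show ?thesis using vieta[of l "[mu1, mu2, cnj mu1, cnj mu2]"] unfolding len4 .
    qed
    then show "?thesis l" using e1 e2 unfolding prod4 by simp
  qed
  have S1e: "S1 = ta + tb" using coeffs_eq[OF Sc, of 3] by (simp; algebra)
  have S2e: "S2 = ra + rb + ta*tb" using coeffs_eq[OF Sc, of 2] by simp
  have S3e: "S3 = ta*rb + tb*ra" using coeffs_eq[OF Sc, of 1] by (simp; algebra)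
  have S4e: "S4 = ra*rb" using coeffs_eq[OF Sc, of 0] by simp
  have n1e: "n1 = n" unfolding n1_def nu1_def ab ..
  have n2e: "n2 = I*(A*u - a*cnj u)" unfolding n2_def nu2_def Uz I_def A_def a_def u_def
    by (simp add: algebra_simps)
  show ?thesis
    by (rule key[OF a0 A0 II n_def p3_def p2_def p1_def p0_def q2_def q1_def q0_def f2_def f1_def f0_def
      ta_def ra_def tb_def rb_def L1e L2e L3e L4e L5e L6e n1e n2e S1e S2e S3e S4e])
qed

end
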